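(* Let $M>0$ and $q,Q,g\in\mathbb{R}$, let $\mathbf{n}\in\mathbb{R}^3$ be a constant vector, and on $\{(\mathbf{x},\boldsymbol{\Pi}):\mathbf{x}\in\mathbb{R}^3\setminus\{0\},\ \boldsymbol{\Pi}\in\mathbb{R}^3\}$ consider the bracket $$\{P,R\}=\sum_i\Big(\frac{\partial P}{\partial x^i}\frac{\partial R}{\partial \Pi_i}-\frac{\partial P}{\partial \Pi_i}\frac{\partial R}{\partial x^i}\Big)+q\sum_{i,j}F_{ij}\frac{\partial P}{\partial \Pi_i}\frac{\partial R}{\partial \Pi_j},\qquad F_{ij}=\epsilon_{ijk}B^k,$$ where $\mathbf{B}(\mathbf{x})=\dfrac{g}{r^{5/2}}\,\mathbf{x}$, $r=|\mathbf{x}|$. Let $$H=\frac{\boldsymbol{\Pi}^2}{2M}+\frac{qQ}{r},\qquad \mathbf{L}=\mathbf{x}\times\boldsymbol{\Pi},\qquad \mathbf{K}_2=\boldsymbol{\Pi}\times\mathbf{L}+MqQ\,\frac{\mathbf{x}}{r}.$$ Then the function $$K=\mathbf{n}\cdot\Big(\mathbf{K}_2+\frac{2gq}{r^{1/2}}\,\mathbf{L}-2g^2q^2\,\frac{\mathbf{x}}{r}\Big)$$ satisfies $\{K,H\}=0$ identically.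
   Context: $\epsilon_{ijk}$ is the Levi-Civita symbol and indices are raised and lowered with the Euclidean metric $\delta_{ij}$. The variables $\Pi_i$ are the gauge-covariant (kinetic) momenta and the bracket above is the gauge-covariant Poisson bracket, in which the $\Pi_i$ are not canonical ($\{\Pi_i,\Pi_j\}=qF_{ij}$). This models a charge $q$ of mass $M$ moving in the Coulomb potential of a charge $Q$ superposed with the spherically symmetric magnetic field $\mathbf{B}$. *)

theory Defs
  imports "HOL-Analysis.Analysis"
begin

text \<open>Phase space points: position x :: real^3 (x \<noteq> 0) and kinetic momentum p :: real^3.
  Observables are functions real^3 \<Rightarrow> real^3 \<Rightarrow> real.\<close>

definition levi_civita :: "3 \<Rightarrow> 3 \<Rightarrow> 3 \<Rightarrow> real" where
  "levi_civita i j k =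
     (if (i, j, k) \<in> {(1, 2, 3), (2, 3, 1), (3, 1, 2)} then 1
      else if (i, j, k) \<in> {(1, 3, 2), (3, 2, 1), (2, 1, 3)} then -1
      else 0)"

definition dx :: "(real^3 \<Rightarrow> real^3 \<Rightarrow> real) \<Rightarrow> 3 \<Rightarrow> real^3 \<Rightarrow> real^3 \<Rightarrow> real" where
  "dx P i x p = deriv (\<lambda>t. P (x + t *\<^sub>R axis i 1) p) 0"

definition dp :: "(real^3 \<Rightarrow> real^3 \<Rightarrow> real) \<Rightarrow> 3 \<Rightarrow> real^3 \<Rightarrow> real^3 \<Rightarrow> real" where
  "dp P i x p = deriv (\<lambda>t. P x (p + t *\<^sub>R axis i 1)) 0"

definition Bfield :: "real \<Rightarrow> real^3 \<Rightarrow> real^3" where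
  "Bfield g x = (g / norm x powr (5/2)) *\<^sub>R x"

definition Ften :: "real \<Rightarrow> real^3 \<Rightarrow> 3 \<Rightarrow> 3 \<Rightarrow> real" where
  "Ften g x i j = (\<Sum>k\<in>UNIV. levi_civita i j k * Bfield g x $ k)"

definition pbracket :: "real \<Rightarrow> real \<Rightarrow> (real^3 \<Rightarrow> real^3 \<Rightarrow> real) \<Rightarrow> (real^3 \<Rightarrow> real^3 \<Rightarrow> real)
    \<Rightarrow> real^3 \<Rightarrow> real^3 \<Rightarrow> real" where
  "pbracket q g P R x p =
     (\<Sum>i\<in>UNIV. dx P i x p * dp R i x p - dp P i x p * dx R i x p)
     + q * (\<Sum>i\<in>UNIV. \<Sum>j\<in>UNIV. Ften g x i j * dp P i x p * dp R j x p)"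

definition Ham :: "real \<Rightarrow> real \<Rightarrow> real \<Rightarrow> real^3 \<Rightarrow> real^3 \<Rightarrow> real" where
  "Ham M q Q x p = (p \<bullet> p) / (2 * M) + q * Q / norm x"

definition Lmom :: "real^3 \<Rightarrow> real^3 \<Rightarrow> real^3" where
  "Lmom x p = cross3 x p"

definition K2vec :: "real \<Rightarrow> real \<Rightarrow> real \<Rightarrow> real^3 \<Rightarrow> real^3 \<Rightarrow> real^3" where
  "K2vec M q Q x p = cross3 p (Lmom x p) + (M * q * Q / norm x) *\<^sub>R x"

definition Kfun :: "real \<Rightarrow> real \<Rightarrow> real \<Rightarrow> real \<Rightarrow> real^3 \<Rightarrow> real^3 \<Rightarrow> real^3 \<Rightarrow> real" where
  "Kfun M q Q g n x p =
     n \<bullet> (K2vec M q Q x p + (2 * g * q / norm x powr (1/2)) *\<^sub>R Lmom x p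
           - (2 * g^2 * q^2 / norm x) *\<^sub>R x)"

end

theory Submission
  imports Defs
begin

lemma alg1:
  fixes Q0 :: real
  assumes "0 < Q0"
  shows "(b * A * sqrt Q0 - A * a * (inverse (sqrt Q0) * e)) / Q0 +
     (d * C * sqrt (sqrt Q0) -
      C * c * (inverse (sqrt (sqrt Q0)) * (inverse (sqrt Q0) * e)) / 2) /
     sqrt Q0 =
     A * (b / sqrt Q0 - a * e / (Q0 * sqrt Q0)) +
     C * (d / sqrt (sqrt Q0) - c * e / (2 * Q0 * sqrt (sqrt Q0)))"
proof -
  define u where "u = sqrt (sqrt Q0)"
  have u: "u > 0" "sqrt Q0 = u^2" "Q0 = u^4" using assms
    by (auto simp: u_def power4_eq_xxxx mult.assoc simp flip: power2_eq_square)
  show ?thesis unfolding u_def[symmetric] u(2) unfolding u(3)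
    using u(1) by (simp add: field_simps eval_nat_numeral)
qed

lemma deriv1:
  fixes Q0 :: real
  assumes "Q0 > 0"
  shows "deriv (\<lambda>t. \<alpha> + \<beta>*t + \<gamma>*t^2 + A*(a+b*t)/sqrt(Q0 + 2*e*t + w*t^2)
           + C*(c+d*t)/sqrt(sqrt(Q0 + 2*e*t + w*t^2))) 0
       = \<beta> + A*(b/sqrt Q0 - a*e/(Q0 * sqrt Q0)) + C*(d/sqrt(sqrt Q0) - c*e/(2*Q0 * sqrt(sqrt Q0)))"
proof (rule DERIV_imp_deriv)
  have s: "sqrt Q0 > 0" "sqrt (sqrt Q0) > 0" using assms by auto
  show "((\<lambda>t. \<alpha> + \<beta>*t + \<gamma>*t^2 + A*(a+b*t)/sqrt(Q0 + 2*e*t + w*t^2)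
           + C*(c+d*t)/sqrt(sqrt(Q0 + 2*e*t + w*t^2))) has_real_derivative
       \<beta> + A*(b/sqrt Q0 - a*e/(Q0 * sqrt Q0)) + C*(d/sqrt(sqrt Q0) - c*e/(2*Q0 * sqrt(sqrt Q0)))) (at 0)"
    using assms s apply (auto intro!: derivative_eq_intros)
    using alg1[OF assms] by simp
qed

lemma deriv2: "deriv (\<lambda>t::real. \<alpha> + \<beta>*t + \<gamma>*t^2) 0 = \<beta>"
  by (rule DERIV_imp_deriv) (auto intro!: derivative_eq_intros)

lemma norm_shift: "norm (x + t *\<^sub>R v) = sqrt (x \<bullet> x + 2*(x \<bullet> v)*t + (v \<bullet> v)*t^2)"
  for x v :: "real^3"
  by (simp add: norm_eq_sqrt_inner inner_add_left inner_add_right inner_commute algebra_simps power2_eq_square)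

lemma norm_powr_half: "norm (y::real^3) powr (1/2) = sqrt (norm y)"
  by (rule powr_half_sqrt) simp

lemma dxH:
  fixes x p :: "real^3"
  assumes "x \<noteq> 0"
  shows "dx (Ham M q Q) i x p = - q*Q*(x $ i) / (norm x ^ 3)"
proof -
  define v where "v = (axis i 1 :: real^3)"
  have xx: "x \<bullet> x > 0" using assms by simp
  have "(\<lambda>t. Ham M q Q (x + t *\<^sub>R v) p) = (\<lambda>t. (p \<bullet> p)/(2*M) + 0*t + 0*t^2
     + (q*Q)*(1+0*t)/sqrt(x \<bullet> x + 2*(x \<bullet> v)*t + (v \<bullet> v)*t^2)
     + 0*(0+0*t)/sqrt(sqrt(x \<bullet> x + 2*(x \<bullet> v)*t + (v \<bullet> v)*t^2)))"
    by (rule ext) (simp add: Ham_def norm_shift)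
  then have "dx (Ham M q Q) i x p = 0 + (q*Q)*(0/sqrt (x \<bullet> x) - 1*(x \<bullet> v)/((x \<bullet> x) * sqrt (x \<bullet> x))) + 0 * (0 / sqrt (sqrt (x \<bullet> x)) - 0 * (x \<bullet> v) / (2 * (x \<bullet> x) * sqrt (sqrt (x \<bullet> x))))"
    unfolding dx_def v_def[symmetric] by (simp only: deriv1[OF xx])
  also have "\<dots> = - q*Q*(x $ i) / (norm x ^ 3)"
    by (simp add: v_def inner_axis norm_eq_sqrt_inner[symmetric] power3_eq_cube power2_eq_square flip: power2_norm_eq_inner)
  finally show ?thesis .
qed

lemma dpH:
  fixes x p :: "real^3"
  shows "dp (Ham M q Q) i x p = (p $ i) / M"
proof -
  define v where "v = (axis i 1 :: real^3)"
  have "(\<lambda>t. Ham M q Q x (p + t *\<^sub>R v)) = (\<lambda>t. ((p \<bullet> p)/(2*M) + q*Q/norm x) + ((p \<bullet> v)/M)*t + ((v \<bullet> v)/(2*M))*t^2)"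
    by (rule ext) (simp add: Ham_def inner_add_left inner_add_right inner_commute add_divide_distrib power2_eq_square algebra_simps)
  then have "dp (Ham M q Q) i x p = (p \<bullet> v)/M"
    unfolding dp_def v_def[symmetric] by (simp only: deriv2)
  then show ?thesis by (simp add: v_def inner_axis)
qed

lemma dpK:
  fixes x p n :: "real^3"
  assumes "x \<noteq> 0"
  shows "dp (Kfun M q Q g n) i x p = n \<bullet> cross3 (axis i 1) (cross3 x p) + n \<bullet> cross3 p (cross3 x (axis i 1))
     + (2*g*q/sqrt (norm x)) * (n \<bullet> cross3 x (axis i 1))"
proof -
  define v where "v = (axis i 1 :: real^3)"
  have "(\<lambda>t. Kfun M q Q g n x (p + t *\<^sub>R v)) = (\<lambda>t. (Kfun M q Q g n x p) + 
     (n \<bullet> cross3 v (cross3 x p) + n \<bullet> cross3 p (cross3 x v)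
     + (2*g*q/sqrt (norm x)) * (n \<bullet> cross3 x v))*t + (n \<bullet> cross3 v (cross3 x v))*t^2)"
    by (rule ext) (simp add: Kfun_def K2vec_def Lmom_def powr_half_sqrt cross_add_left cross_add_right
       cross_mult_left cross_mult_right inner_add_right inner_diff_right power2_eq_square algebra_simps)
  then show ?thesis
    unfolding dp_def v_def[symmetric] by (simp only: deriv2)
qed

lemma dxK:
  fixes x p n :: "real^3"
  assumes "x \<noteq> 0"
  shows "dx (Kfun M q Q g n) i x p = n \<bullet> cross3 p (cross3 (axis i 1) p)
     + (M*q*Q - 2*g^2*q^2)*((n $ i)/norm x - (n \<bullet> x)*(x $ i)/(norm x ^ 3))
     + (2*g*q)*((n \<bullet> cross3 (axis i 1) p)/sqrt (norm x) - (n \<bullet> cross3 x p)*(x $ i)/(2*(norm x)^2 * sqrt (norm x)))"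
proof -
  define v where "v = (axis i 1 :: real^3)"
  have xx: "x \<bullet> x > 0" using assms by simp
  have "(\<lambda>t. Kfun M q Q g n (x + t *\<^sub>R v) p) = (\<lambda>t. n \<bullet> cross3 p (cross3 x p) + (n \<bullet> cross3 p (cross3 v p))*t + 0*t^2
     + (M*q*Q - 2*g^2*q^2)*((n \<bullet> x)+(n \<bullet> v)*t)/sqrt(x \<bullet> x + 2*(x \<bullet> v)*t + (v \<bullet> v)*t^2)
     + (2*g*q)*((n \<bullet> cross3 x p)+(n \<bullet> cross3 v p)*t)/sqrt(sqrt(x \<bullet> x + 2*(x \<bullet> v)*t + (v \<bullet> v)*t^2)))"
    by (rule ext) (simp only: Kfun_def K2vec_def Lmom_def norm_powr_half, simp add: norm_shift cross_add_left cross_add_right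
       cross_mult_left cross_mult_right inner_add_right inner_diff_right diff_divide_distrib add_divide_distrib algebra_simps)
  then have "dx (Kfun M q Q g n) i x p = (n \<bullet> cross3 p (cross3 v p)) 
     + (M*q*Q - 2*g^2*q^2)*((n \<bullet> v)/sqrt (x \<bullet> x) - (n \<bullet> x)*(x \<bullet> v)/((x \<bullet> x) * sqrt (x \<bullet> x)))
     + (2*g*q)*((n \<bullet> cross3 v p)/sqrt(sqrt (x \<bullet> x)) - (n \<bullet> cross3 x p)*(x \<bullet> v)/(2*(x \<bullet> x) * sqrt(sqrt (x \<bullet> x))))"
    unfolding dx_def v_def[symmetric] by (simp only: deriv1[OF xx])
  also have "\<dots> = n \<bullet> cross3 p (cross3 (axis i 1) p)
     + (M*q*Q - 2*g^2*q^2)*((n $ i)/norm x - (n \<bullet> x)*(x $ i)/(norm x ^ 3))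
     + (2*g*q)*((n \<bullet> cross3 (axis i 1) p)/sqrt (norm x) - (n \<bullet> cross3 x p)*(x $ i)/(2*(norm x)^2 * sqrt (norm x)))"
    by (simp add: v_def inner_axis inner_commute[of n] norm_eq_sqrt_inner[symmetric] power3_eq_cube power2_eq_square flip: power2_norm_eq_inner)
  finally show ?thesis .
qed

lemma lc: "levi_civita 1 2 3 = 1" "levi_civita 2 3 1 = 1" "levi_civita 3 1 2 = 1"
  "levi_civita 1 3 2 = -1" "levi_civita 3 2 1 = -1" "levi_civita 2 1 3 = -1"
  "levi_civita 1 1 k = 0" "levi_civita 2 2 k = 0" "levi_civita 3 3 k = 0"
  "levi_civita 1 2 1 = 0" "levi_civita 1 2 2 = 0" "levi_civita 2 1 1 = 0" "levi_civita 2 1 2 = 0"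
  "levi_civita 1 3 1 = 0" "levi_civita 1 3 3 = 0" "levi_civita 3 1 1 = 0" "levi_civita 3 1 3 = 0"
  "levi_civita 2 3 2 = 0" "levi_civita 2 3 3 = 0" "levi_civita 3 2 2 = 0" "levi_civita 3 2 3 = 0"
  by (simp_all add: levi_civita_def)

lemma ax: "axis (1::3) (1::real) = vector [1,0,0]" "axis (2::3) (1::real) = vector [0,1,0]" "axis (3::3) (1::real) = vector [0,0,1]"
  by (simp_all add: vec_eq_iff axis_def forall_3)

theorem mainTheorem2:
  fixes M q Q g :: real and n x p :: "real^3"
  assumes "M > 0" and "x \<noteq> 0"
  shows "pbracket q g (Kfun M q Q g n) (Ham M q Q) x p = 0"
proof -
  define r where "r = norm x"
  define s where "s = sqrt r"
  have r0: "r > 0" using assms by (simp add: r_def)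
  have r: "r > 0" "r = s^2" "s > 0" "r^2 = (x$1)^2 + (x$2)^2 + (x$3)^2" using r0
    by (auto simp: s_def) (simp only: r_def power2_norm_eq_inner, simp add: inner_vec_def sum_3 power2_eq_square)
  have B: "norm x powr (5/2) = r^2 * s"
  proof -
    have "norm x powr (5/2) = norm x powr (2 + 1/2)" by simp
    also have "\<dots> = norm x powr 2 * norm x powr (1/2)" by (rule powr_add)
    also have "\<dots> = r^2 * s" using r0 by (simp add: r_def s_def powr_half_sqrt)
    finally show ?thesis .
  qed
  define u where "u = inverse s"
  define m where "m = inverse M"
  have h: "u^4 * ((x$1)^2 + (x$2)^2 + (x$3)^2) = 1"
  proof -
    have h1: "(x$1)^2+(x$2)^2+(x$3)^2 = s^4" using r(2,4) by simp
    show ?thesis unfolding h1 u_def using r(3) by (simp add: field_simps)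
  qed
  have hr: "inverse r = u^2" unfolding u_def r(2) by (simp add: power_inverse)
  have hs: "inverse s = u" by (simp add: u_def)
  define nx where "nx = n$1*x$1+n$2*x$2+n$3*x$3"
  define xp where "xp = x$1*p$1+x$2*p$2+x$3*p$3"
  define np where "np = n$1*p$1+n$2*p$2+n$3*p$3"
  define xx where "xx = (x$1)^2+(x$2)^2+(x$3)^2"
  have key: "pbracket q g (Kfun M q Q g n) (Ham M q Q) x p = M*q*Q*m*np*u^2 - M*q*Q*m*nx*xp*u^6 + q*Q*u^6*nx*xp - q*Q*u^6*np*xx
     - 2*g^2*q^2*m*np*u^2*(1 - xx*u^4)"
    unfolding pbracket_def dxK[OF assms(2)] dpK[OF assms(2)] dxH[OF assms(2)] dpH Ften_def Bfield_def B
    unfolding r_def[symmetric] s_def[symmetric]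
    apply (simp only: divide_inverse inverse_mult_distrib power_inverse[symmetric] mult_1_left mult_1_right
       inverse_minus_eq hr hs)
    unfolding m_def[symmetric] nx_def xp_def np_def xx_def
    apply (simp add: sum_3 lc ax cross3_simps)
    apply algebra
    done
  have Mm: "M*m = 1" using assms(1) by (simp add: m_def)
  have h': "xx*u^4 = 1" using h by (simp add: xx_def mult.commute)
  have "M*q*Q*m*np*u^2 - M*q*Q*m*nx*xp*u^6 + q*Q*u^6*nx*xp - q*Q*u^6*np*xx
     - 2*g^2*q^2*m*np*u^2*(1 - xx*u^4) = (M*m)*q*Q*np*u^2 - (M*m - 1)*q*Q*nx*xp*u^6 - q*Q*np*u^2*(xx*u^4)
     - 2*g^2*q^2*m*np*u^2*(1 - xx*u^4)"
    by (simp add: algebra_simps power_add[symmetric] eval_nat_numeral)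
  also have "\<dots> = 0" unfolding Mm h' by simp
  finally show ?thesis using key by simp
qed
end
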